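(* Let $\varphi$ be a formula of $\mathrm{SMT}_\mathrm{RL}$ over a single string variable $x$, and let $(\mathrm{TS},P) = \textrm{BFA-to-TS}(\textrm{SMT-to-BFA}(\varphi))$. Then for every word $w = \sigma_0\cdots\sigma_{n-1} \in \Sigma^*$, the assignment $x := w$ satisfies $\varphi$ if and only if $w$ is the input sequence of a counterexample to $P$ in $\mathrm{TS}$, i.e. there is a path $v_0,\sigma_0,v_1,\ldots,\sigma_{n-1},v_n$ of $\mathrm{TS}$ with $v_0$ satisfying $I_B$, $(v_k,\sigma_k,v_{k+1})$ satisfying $\Delta_B$ for all $0\le k<n$, and $v_n$ violating $P$. In particular, $\varphi$ is satisfiable iff $P$ is not valid in $\mathrm{TS}$.
   Context: Fix a finite alphabet $\Sigma$. $\mathrm{SMT}_\mathrm{RL}$ is the set of formulas generated by $\varphi ::= \varphi \wedge \varphi \mid \varphi \vee \varphi \mid \neg \varphi \mid x \in L$, where $x$ is a string variable and $L$ is the language of a regular expression over $\Sigma$; the semantics is Boolean logic together with language membership. A Boolean finite automaton (BFA) is a tuple $B = (\Sigma, \tilde Q, \tilde I, \tilde F, \tilde\Delta)$ where $\tilde Q$ is a finite set of state variables, $\tilde I$ is a Boolean formula over $\tilde Q$, $\tilde F : \tilde Q \to \{0,1\}$ is an assignment, and $\tilde\Delta$ assigns to each $q \in \tilde Q$ and $\sigma \in \Sigma$ a Boolean formula $\tilde\Delta(q,\sigma)$ over $\tilde Q$. A word $\sigma_0\cdots\sigma_{n-1}$ is accepted by $B$ iff the formula $G_n$ evaluates to true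 under the assignment $\tilde F$, where $G_0 = \tilde I$ and $G_{k+1}$ is obtained from $G_k$ by simultaneously replacing each $q \in \tilde Q$ by $\tilde\Delta(q,\sigma_k)$. NFA-to-BFA maps an NFA $(\Sigma, Q, I, F, \Delta)$ to the BFA with $\tilde Q = Q$, $\tilde I = \bigvee_{q\in I} q$, $\tilde F$ the indicator of $F$, and $\tilde\Delta(q,\sigma) = \bigvee\{q' : (q,\sigma,q')\in\Delta\}$. Re-to-NFA is the standard Thompson construction from a regular expression to an NFA with $\epsilon$-transitions, followed by $\epsilon$-elimination. BFA operations: for BFAs with disjoint state sets, $B_1 \cup B_2$ (resp. $B_1\cap B_2$) has state set $\tilde Q_1 \uplus \tilde Q_2$, final assignment and transition function the disjoint unions of those of $B_1,B_2$, and initial formula $\tilde I_1 \vee \tilde I_2$ (resp. $\tilde I_1 \wedge \tilde I_2$); $B^\complement$ is $B$ with initial formula $\neg\tilde I$. SMT-to-BFA rewrites $\varphi$ recursively into a single BFA: $x\in L \mapsto$ NFA-to-BFA(Re-to-NFA($L$)), $\wedge \mapsto \cap$, $\vee\mapsto\cup$, $\neg \mapsto {}^\complement$. A finite-state transition system consists of Boolean state bits, Boolean input bits encoding symbols of $\Sigma$, an initial-state formula $I_B$ over the state bits, and a transition formula $\Delta_B$ over current state bits, input symbol and next-state bits; a property $P$ is a formula over state bits, and $P$ is valid if no path from a state satisfying $I_B$ reaches a state violating $P$. BFA-to-TS maps a BFA $(\Sigma,\tilde Q,\tilde I,\tilde F,\tilde\Delta)$ to the transition system with one state bit $b_q$ per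 $q\in\tilde Q$, $I_B = \tilde I[q\mapsto b_q]$, transition relation $\bigwedge_{q\in\tilde Q} \big( b_q = \bigvee_{\sigma\in\Sigma} (x=\sigma \wedge \tilde\Delta(q,\sigma)[q'\mapsto b'_{q'}])\big)$ (where $b'$ are next-state bits and $x$ the current input symbol), and property $P = \bigvee_{\tilde F(q)=1}\neg b_q \vee \bigvee_{\tilde F(q)=0} b_q$ (so $P$ is violated exactly at the state equal to $\tilde F$). *)

theory Defs
  imports Main
begin

datatype 'a rexp = Zero | One | Atom 'a | Plus "'a rexp" "'a rexp"
  | Times "'a rexp" "'a rexp" | Star "'a rexp"

definition conc :: "'a list set \<Rightarrow> 'a list set \<Rightarrow> 'a list set" where
  "conc A B = {u @ v | u v. u \<in> A \<and> v \<in> B}"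

inductive_set kstar :: "'a list set \<Rightarrow> 'a list set" for A where
  kstar_Nil: "[] \<in> kstar A"
| kstar_app: "u \<in> A \<Longrightarrow> v \<in> kstar A \<Longrightarrow> u @ v \<in> kstar A"

fun lang :: "'a rexp \<Rightarrow> 'a list set" where
  "lang Zero = {}"
| "lang One = {[]}"
| "lang (Atom a) = {[a]}"
| "lang (Plus r s) = lang r \<union> lang s"
| "lang (Times r s) = conc (lang r) (lang s)"
| "lang (Star r) = kstar (lang r)"

datatype 'a smt = SAnd "'a smt" "'a smt" | SOr "'a smt" "'a smt" | SNot "'a smt"
  | InRe "'a rexp"

fun smt_sat :: "'a smt \<Rightarrow> 'a list \<Rightarrow> bool" where
  "smt_sat (SAnd p q) w = (smt_sat p w \<and> smt_sat q w)"
| "smt_sat (SOr p q) w = (smt_sat p w \<or> smt_sat q w)"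
| "smt_sat (SNot p) w = (\<not> smt_sat p w)"
| "smt_sat (InRe r) w = (w \<in> lang r)"

datatype 'v bexp = BVar 'v | BTrue | BFalse | BNot "'v bexp"
  | BAnd "'v bexp" "'v bexp" | BOr "'v bexp" "'v bexp"

fun beval :: "('v \<Rightarrow> bool) \<Rightarrow> 'v bexp \<Rightarrow> bool" where
  "beval v (BVar x) = v x"
| "beval v BTrue = True"
| "beval v BFalse = False"
| "beval v (BNot p) = (\<not> beval v p)"
| "beval v (BAnd p q) = (beval v p \<and> beval v q)"
| "beval v (BOr p q) = (beval v p \<or> beval v q)"

definition bdisj :: "'v::linorder set \<Rightarrow> 'v bexp" where
  "bdisj S = foldr (\<lambda>q f. BOr (BVar q) f) (sorted_list_of_set S) BFalse"

text \<open>epsilon-NFA produced by Thompson's construction (None = epsilon)\<close>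
record 'a enfa =
  e_states :: "nat set"
  e_init :: nat
  e_final :: nat
  e_trans :: "(nat \<times> 'a option \<times> nat) set"

record ('s, 'a) nfa =
  n_states :: "'s set"
  n_init :: "'s set"
  n_final :: "'s set"
  n_trans :: "('s \<times> 'a \<times> 's) set"

text \<open>Thompson construction; the second argument is the next fresh state,
  the second result the next fresh state after construction.\<close>
fun thompson :: "'a rexp \<Rightarrow> nat \<Rightarrow> 'a enfa \<times> nat" where
  "thompson Zero n =
     (\<lparr>e_states = {n, n+1}, e_init = n, e_final = n+1, e_trans = {}\<rparr>, n+2)"
| "thompson One n =
     (\<lparr>e_states = {n, n+1}, e_init = n, e_final = n+1, e_trans = {(n, None, n+1)}\<rparr>, n+2)"
| "thompson (Atom a) n =
     (\<lparr>e_states = {n, n+1}, e_init = n, e_final = n+1, e_trans = {(n, Some a, n+1)}\<rparr>, n+2)"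
| "thompson (Plus r s) n =
     (let (A, m) = thompson r (n+2); (B, k) = thompson s m in
      (\<lparr>e_states = {n, n+1} \<union> e_states A \<union> e_states B, e_init = n, e_final = n+1,
        e_trans = e_trans A \<union> e_trans B \<union>
          {(n, None, e_init A), (n, None, e_init B),
           (e_final A, None, n+1), (e_final B, None, n+1)}\<rparr>, k))"
| "thompson (Times r s) n =
     (let (A, m) = thompson r n; (B, k) = thompson s m in
      (\<lparr>e_states = e_states A \<union> e_states B, e_init = e_init A, e_final = e_final B,
        e_trans = e_trans A \<union> e_trans B \<union> {(e_final A, None, e_init B)}\<rparr>, k))"
| "thompson (Star r) n =
     (let (A, m) = thompson r (n+2) in
      (\<lparr>e_states = {n, n+1} \<union> e_states A, e_init = n, e_final = n+1,
        e_trans = e_trans A \<union>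
          {(n, None, e_init A), (n, None, n+1),
           (e_final A, None, e_init A), (e_final A, None, n+1)}\<rparr>, m))"

definition eps_rel :: "'a enfa \<Rightarrow> (nat \<times> nat) set" where
  "eps_rel A = {(p, q). (p, None, q) \<in> e_trans A}"

definition eps_elim :: "'a enfa \<Rightarrow> (nat, 'a) nfa" where
  "eps_elim A =
     \<lparr>n_states = e_states A,
      n_init = {e_init A},
      n_final = {q \<in> e_states A. (q, e_final A) \<in> (eps_rel A)\<^sup>*},
      n_trans = {(q, \<sigma>, q'). \<exists>p. (q, p) \<in> (eps_rel A)\<^sup>* \<and> (p, Some \<sigma>, q') \<in> e_trans A}\<rparr>"

definition re_to_nfa :: "'a rexp \<Rightarrow> (nat, 'a) nfa" where
  "re_to_nfa r = eps_elim (fst (thompson r 0))"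

record ('q, 'a) bfa =
  b_states :: "'q set"
  b_init :: "'q bexp"
  b_fin :: "'q \<Rightarrow> bool"
  b_trans :: "'q \<Rightarrow> 'a \<Rightarrow> 'q bexp"

definition nfa_to_bfa :: "(nat, 'a) nfa \<Rightarrow> (nat, 'a) bfa" where
  "nfa_to_bfa N =
     \<lparr>b_states = n_states N,
      b_init = bdisj (n_init N),
      b_fin = (\<lambda>q. q \<in> n_final N),
      b_trans = (\<lambda>q \<sigma>. bdisj {q'. (q, \<sigma>, q') \<in> n_trans N})\<rparr>"

text \<open>State names for composed BFAs: disjoint unions realised by tagging.\<close>
datatype sloc = Base nat | InL sloc | InR sloc

definition bfa_lift :: "(nat, 'a) bfa \<Rightarrow> (sloc, 'a) bfa" where
  "bfa_lift B =
     \<lparr>b_states = Base ` b_states B,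
      b_init = map_bexp Base (b_init B),
      b_fin = (\<lambda>q. case q of Base n \<Rightarrow> b_fin B n | _ \<Rightarrow> False),
      b_trans = (\<lambda>q \<sigma>. case q of Base n \<Rightarrow> map_bexp Base (b_trans B n \<sigma>) | _ \<Rightarrow> BFalse)\<rparr>"

definition bfa_dunion :: "(sloc, 'a) bfa \<Rightarrow> (sloc, 'a) bfa \<Rightarrow> sloc bexp \<Rightarrow> (sloc, 'a) bfa" where
  "bfa_dunion B1 B2 I =
     \<lparr>b_states = InL ` b_states B1 \<union> InR ` b_states B2,
      b_init = I,
      b_fin = (\<lambda>q. case q of InL p \<Rightarrow> b_fin B1 p | InR p \<Rightarrow> b_fin B2 p | Base _ \<Rightarrow> False),
      b_trans = (\<lambda>q \<sigma>. case q of InL p \<Rightarrow> map_bexp InL (b_trans B1 p \<sigma>)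
                                | InR p \<Rightarrow> map_bexp InR (b_trans B2 p \<sigma>)
                                | Base _ \<Rightarrow> BFalse)\<rparr>"

definition bfa_union :: "(sloc, 'a) bfa \<Rightarrow> (sloc, 'a) bfa \<Rightarrow> (sloc, 'a) bfa" where
  "bfa_union B1 B2 = bfa_dunion B1 B2
     (BOr (map_bexp InL (b_init B1)) (map_bexp InR (b_init B2)))"

definition bfa_inter :: "(sloc, 'a) bfa \<Rightarrow> (sloc, 'a) bfa \<Rightarrow> (sloc, 'a) bfa" where
  "bfa_inter B1 B2 = bfa_dunion B1 B2
     (BAnd (map_bexp InL (b_init B1)) (map_bexp InR (b_init B2)))"

definition bfa_compl :: "(sloc, 'a) bfa \<Rightarrow> (sloc, 'a) bfa" where
  "bfa_compl B = B\<lparr>b_init := BNot (b_init B)\<rparr>"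

fun smt_to_bfa :: "'a smt \<Rightarrow> (sloc, 'a) bfa" where
  "smt_to_bfa (InRe r) = bfa_lift (nfa_to_bfa (re_to_nfa r))"
| "smt_to_bfa (SAnd p q) = bfa_inter (smt_to_bfa p) (smt_to_bfa q)"
| "smt_to_bfa (SOr p q) = bfa_union (smt_to_bfa p) (smt_to_bfa q)"
| "smt_to_bfa (SNot p) = bfa_compl (smt_to_bfa p)"

text \<open>A state is an assignment to the state bits (bits outside ts_bits are fixed to False).\<close>
record ('q, 'a) ts =
  ts_bits :: "'q set"
  ts_init :: "('q \<Rightarrow> bool) \<Rightarrow> bool"
  ts_trans :: "('q \<Rightarrow> bool) \<Rightarrow> 'a \<Rightarrow> ('q \<Rightarrow> bool) \<Rightarrow> bool"

definition ts_state :: "('q, 'a) ts \<Rightarrow> ('q \<Rightarrow> bool) \<Rightarrow> bool" where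
  "ts_state T v = (\<forall>q. q \<notin> ts_bits T \<longrightarrow> \<not> v q)"

definition bfa_to_ts :: "('q, 'a) bfa \<Rightarrow> ('q, 'a) ts \<times> (('q \<Rightarrow> bool) \<Rightarrow> bool)" where
  "bfa_to_ts B =
     (\<lparr>ts_bits = b_states B,
       ts_init = (\<lambda>v. beval v (b_init B)),
       ts_trans = (\<lambda>v x v'. \<forall>q \<in> b_states B.
          v q = (\<exists>\<sigma>. x = \<sigma> \<and> beval v' (b_trans B q \<sigma>)))\<rparr>,
      (\<lambda>v. (\<exists>q \<in> b_states B. b_fin B q \<and> \<not> v q) \<or> (\<exists>q \<in> b_states B. \<not> b_fin B q \<and> v q)))"

definition ts_path :: "('q, 'a) ts \<Rightarrow> 'a list \<Rightarrow> (nat \<Rightarrow> 'q \<Rightarrow> bool) \<Rightarrow> bool" where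
  "ts_path T w vs =
     ((\<forall>k \<le> length w. ts_state T (vs k)) \<and> ts_init T (vs 0) \<and>
      (\<forall>k < length w. ts_trans T (vs k) (w ! k) (vs (Suc k))))"

definition is_cex :: "('q, 'a) ts \<Rightarrow> (('q \<Rightarrow> bool) \<Rightarrow> bool) \<Rightarrow> 'a list \<Rightarrow> bool" where
  "is_cex T P w = (\<exists>vs. ts_path T w vs \<and> \<not> P (vs (length w)))"

definition ts_valid :: "('q, 'a) ts \<Rightarrow> (('q \<Rightarrow> bool) \<Rightarrow> bool) \<Rightarrow> bool" where
  "ts_valid T P = (\<forall>w vs. ts_path T w vs \<longrightarrow> P (vs (length w)))"

end

theory Submission
  imports Defs
begin

section \<open>Generic: paths in epsilon automata\<close>

fun lab :: "'a option \<Rightarrow> 'a list" where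
  "lab None = []" | "lab (Some a) = [a]"

inductive steps :: "(nat \<times> 'a option \<times> nat) set \<Rightarrow> nat \<Rightarrow> 'a list \<Rightarrow> nat \<Rightarrow> bool"
  for T where
  srefl: "steps T p [] p"
| sstep: "(p, l, p') \<in> T \<Longrightarrow> steps T p' w q \<Longrightarrow> steps T p (lab l @ w) q"

lemma steps_trans: "steps T p u q \<Longrightarrow> steps T q v s \<Longrightarrow> steps T p (u @ v) s"
  by (induction rule: steps.induct) (auto intro: steps.intros)

lemma steps_mono: "steps T p w q \<Longrightarrow> T \<subseteq> T' \<Longrightarrow> steps T' p w q"
  by (induction rule: steps.induct) (auto intro: steps.intros)

lemma steps_noout: "steps T p w q \<Longrightarrow> (\<forall>l t. (p, l, t) \<notin> T) \<Longrightarrow> w = [] \<and> q = p"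
  by (cases rule: steps.cases) auto

lemma steps_first: "steps T p w q \<Longrightarrow> p \<noteq> q \<Longrightarrow>
   \<exists>l p' w'. (p, l, p') \<in> T \<and> steps T p' w' q \<and> w = lab l @ w'"
  by (cases rule: steps.cases) auto

lemma sedge: "(p, l, q) \<in> T \<Longrightarrow> steps T p (lab l) q"
  using steps.sstep[OF _ steps.srefl] by fastforce

definition inside :: "(nat \<times> 'a option \<times> nat) set \<Rightarrow> nat set \<Rightarrow> (nat \<times> 'a option \<times> nat) set" where
  "inside T S = {(a, l, b). (a, l, b) \<in> T \<and> a \<in> S \<and> b \<in> S}"

lemma steps_exit: "steps T p w q \<Longrightarrow> p \<in> S \<Longrightarrow>
  (steps (inside T S) p w q \<and> q \<in> S) \<or>
  (\<exists>s l t w1 w2. (s, l, t) \<in> T \<and> s \<in> S \<and> t \<notin> S \<and> steps (inside T S) p w1 s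
     \<and> steps T t w2 q \<and> w = w1 @ lab l @ w2)"
proof (induction rule: steps.induct)
  case (srefl p)
  then show ?case by (auto intro: steps.intros)
next
  case (sstep p l p' w q)
  show ?case
  proof (cases "p' \<in> S")
    case False
    then show ?thesis using sstep by (metis append_Nil steps.srefl)
  next
    case True
    have e: "(p, l, p') \<in> inside T S" using sstep True by (auto simp: inside_def)
    from sstep.IH[OF True] show ?thesis
    proof
      assume "steps (inside T S) p' w q \<and> q \<in> S"
      then show ?thesis using e steps.sstep by blast
    next
      assume "\<exists>s l t w1 w2. (s, l, t) \<in> T \<and> s \<in> S \<and> t \<notin> S \<and> steps (inside T S) p' w1 s
        \<and> steps T t w2 q \<and> w = w1 @ lab l @ w2"
      then obtain s l2 t w1 w2 where h: "(s, l2, t) \<in> T" "s \<in> S" "t \<notin> S"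
        "steps (inside T S) p' w1 s" "steps T t w2 q" "w = w1 @ lab l2 @ w2" by blast
      have "steps (inside T S) p (lab l @ w1) s" using e h(4) steps.sstep by blast
      then show ?thesis using h by (intro disjI2) (rule exI[of _ s], rule exI[of _ l2], rule exI[of _ t],
          rule exI[of _ "lab l @ w1"], rule exI[of _ w2], auto)
    qed
  qed
qed

lemma steps_back: "steps T' p w q \<Longrightarrow> T' = TA \<union> {(f, None, i)} \<Longrightarrow> q = f \<Longrightarrow>
  (\<forall>u. steps TA i u f \<longrightarrow> u \<in> L) \<Longrightarrow>
  \<exists>u v. w = u @ v \<and> steps TA p u f \<and> v \<in> kstar L"
proof (induction rule: steps.induct)
  case (srefl p)
  then show ?case by (auto intro: steps.intros kstar.intros)
next
  case (sstep p l p' w q)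
  then obtain u v where uv: "w = u @ v" "steps TA p' u f" "v \<in> kstar L" by blast
  show ?case
  proof (cases "(p, l, p') \<in> TA")
    case True
    then show ?thesis using uv by (metis append.assoc steps.sstep)
  next
    case False
    then have "p = f" "l = None" "p' = i" using sstep by auto
    then show ?thesis using uv sstep.prems
      by (metis append_Nil lab.simps(1) kstar.kstar_app steps.srefl)
  qed
qed


definition wf_enfa :: "'a enfa \<Rightarrow> nat \<Rightarrow> nat \<Rightarrow> bool" where
  "wf_enfa A n m = (e_states A \<subseteq> {n..<m} \<and> e_init A \<in> e_states A \<and> e_final A \<in> e_states A
     \<and> (\<forall>p l q. (p, l, q) \<in> e_trans A \<longrightarrow> p \<in> e_states A \<and> q \<in> e_states A)
     \<and> finite (e_trans A))"

lemma thompson_wf: "thompson r n = (A, m) \<Longrightarrow> wf_enfa A n m"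
proof (induction r arbitrary: n A m)
  case (Plus r s)
  obtain A1 m1 where a: "thompson r (n+2) = (A1, m1)" by (metis surj_pair)
  obtain B1 k where b: "thompson s m1 = (B1, k)" by (metis surj_pair)
  have w1: "wf_enfa A1 (n+2) m1" and w2: "wf_enfa B1 m1 k" using Plus.IH a b by auto
  have "n + 2 < m1" "m1 < k" using w1 w2 unfolding wf_enfa_def by fastforce+
  then show ?case using Plus.prems w1 w2 a b unfolding wf_enfa_def by (auto simp: Let_def) fastforce+
next
  case (Times r s)
  obtain A1 m1 where a: "thompson r n = (A1, m1)" by (metis surj_pair)
  obtain B1 k where b: "thompson s m1 = (B1, k)" by (metis surj_pair)
  have w1: "wf_enfa A1 n m1" and w2: "wf_enfa B1 m1 k" using Times.IH a b by auto
  have "n < m1" "m1 < k" using w1 w2 unfolding wf_enfa_def by fastforce+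
  then show ?case using Times.prems w1 w2 a b unfolding wf_enfa_def by (auto simp: Let_def) fastforce+
next
  case (Star r)
  obtain A1 m1 where a: "thompson r (n+2) = (A1, m1)" by (metis surj_pair)
  have w1: "wf_enfa A1 (n+2) m1" using Star.IH a by auto
  have "n + 2 < m1" using w1 unfolding wf_enfa_def by fastforce+
  then show ?case using Star.prems w1 a unfolding wf_enfa_def by (auto simp: Let_def) fastforce+
qed (auto simp: wf_enfa_def)


section \<open>Thompson correctness\<close>

lemma wfD:
  assumes "wf_enfa A n m"
  shows "e_states A \<subseteq> {n..<m}" "e_init A \<in> e_states A" "e_final A \<in> e_states A"
    "\<And>p l q. (p, l, q) \<in> e_trans A \<Longrightarrow> p \<in> e_states A"
    "\<And>p l q. (p, l, q) \<in> e_trans A \<Longrightarrow> q \<in> e_states A"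
    "finite (e_trans A)"
  using assms unfolding wf_enfa_def by blast+

lemma thompson_correct: "thompson r n = (A, m) \<Longrightarrow>
  steps (e_trans A) (e_init A) w (e_final A) \<longleftrightarrow> w \<in> lang r"
proof (induction r arbitrary: n A m w)
  case Zero
  then show ?case by (auto dest: steps_noout)
next
  case One
  then have T: "e_trans A = {(n, None, n+1)}" "e_init A = n" "e_final A = n+1" by auto
  show ?case
  proof
    assume "steps (e_trans A) (e_init A) w (e_final A)"
    then have "steps (e_trans A) n w (n+1)" using T by simp
    from steps_first[OF this] obtain l p' w' where "(n, l, p') \<in> e_trans A" "steps (e_trans A) p' w' (n+1)" "w = lab l @ w'"
      by auto
    then show "w \<in> lang One" using T by (auto dest: steps_noout)
  next
    assume "w \<in> lang One"
    then show "steps (e_trans A) (e_init A) w (e_final A)" using T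
      using sedge[of n None "n+1" "e_trans A"] by auto
  qed
next
  case (Atom a)
  then have T: "e_trans A = {(n, Some a, n+1)}" "e_init A = n" "e_final A = n+1" by auto
  show ?case
  proof
    assume "steps (e_trans A) (e_init A) w (e_final A)"
    then have "steps (e_trans A) n w (n+1)" using T by simp
    from steps_first[OF this] obtain l p' w' where "(n, l, p') \<in> e_trans A" "steps (e_trans A) p' w' (n+1)" "w = lab l @ w'"
      by auto
    then show "w \<in> lang (Atom a)" using T by (auto dest: steps_noout)
  next
    assume "w \<in> lang (Atom a)"
    then show "steps (e_trans A) (e_init A) w (e_final A)" using T
      using sedge[of n "Some a" "n+1" "e_trans A"] by auto
  qed
next
  case (Plus r s)
  obtain A1 m1 where a: "thompson r (n+2) = (A1, m1)" by (metis surj_pair)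
  obtain B1 k where b: "thompson s m1 = (B1, k)" by (metis surj_pair)
  have w1: "wf_enfa A1 (n+2) m1" and w2: "wf_enfa B1 m1 k" using thompson_wf a b by auto
  note W1 = wfD[OF w1] and W2 = wfD[OF w2]
  have IH1: "\<And>w. steps (e_trans A1) (e_init A1) w (e_final A1) \<longleftrightarrow> w \<in> lang r" using Plus.IH(1)[OF a] .
  have IH2: "\<And>w. steps (e_trans B1) (e_init B1) w (e_final B1) \<longleftrightarrow> w \<in> lang s" using Plus.IH(2)[OF b] .
  define T where "T = e_trans A1 \<union> e_trans B1 \<union>
          {(n, None, e_init A1), (n, None, e_init B1),
           (e_final A1, None, n+1), (e_final B1, None, n+1)}"
  have Aeq: "A = \<lparr>e_states = {n, n+1} \<union> e_states A1 \<union> e_states B1, e_init = n, e_final = n+1,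
        e_trans = T\<rparr>"
    using Plus.prems a b unfolding T_def by (simp add: Let_def)
  have A: "e_trans A = T" "e_init A = n" "e_final A = n+1"
    by (simp_all add: Aeq)
  have dA: "\<And>x. x \<in> e_states A1 \<Longrightarrow> x \<notin> e_states B1 \<and> x \<noteq> n \<and> x \<noteq> n+1" using W1(1) W2(1) by fastforce
  have dB: "\<And>x. x \<in> e_states B1 \<Longrightarrow> x \<noteq> n \<and> x \<noteq> n+1" using W1(1) W2(1) W1(2) by fastforce
  have noout: "\<forall>l t. (n+1, l, t) \<notin> T" unfolding T_def using dA[OF W1(3)] dB[OF W2(3)] W1(4) W2(4) dA dB by fastforce
  have branch: "w \<in> lang r" if st: "steps T (e_init A1) w (n+1)" for w
  proof -
    from steps_exit[OF st W1(2)] obtain s' l t w1 w2 where h: "(s', l, t) \<in> T" "s' \<in> e_states A1"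
      "t \<notin> e_states A1" "steps (inside T (e_states A1)) (e_init A1) w1 s'"
      "steps T t w2 (n+1)" "w = w1 @ lab l @ w2" using dA[of "n+1"] by blast
    have "(s', l, t) \<notin> e_trans A1" "(s', l, t) \<notin> e_trans B1" using h(2,3) W1(5) W2(4) dA by blast+
    then have e: "s' = e_final A1 \<and> l = None \<and> t = n+1" using h(1,2) dA[OF h(2)] dA[OF W1(3)] W2(3) unfolding T_def by auto
    have "inside T (e_states A1) \<subseteq> e_trans A1" unfolding inside_def T_def using dA W2(3) W2(4) by auto
    then have "w1 \<in> lang r" using h(4) e IH1 steps_mono by blast
    moreover have "w2 = []" using steps_noout[OF h(5)] noout e by auto
    ultimately show ?thesis using h(6) e by simp
  qed
  have branch2: "w \<in> lang s" if st: "steps T (e_init B1) w (n+1)" for w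
  proof -
    from steps_exit[OF st W2(2)] obtain s' l t w1 w2 where h: "(s', l, t) \<in> T" "s' \<in> e_states B1"
      "t \<notin> e_states B1" "steps (inside T (e_states B1)) (e_init B1) w1 s'"
      "steps T t w2 (n+1)" "w = w1 @ lab l @ w2" using dB[of "n+1"] by blast
    have "(s', l, t) \<notin> e_trans B1" "(s', l, t) \<notin> e_trans A1" using h(2,3) W2(5) W1(4) dA by blast+
    then have e: "s' = e_final B1 \<and> l = None \<and> t = n+1" using h(1,2) dB[OF h(2)] dA[OF W1(3)] W2(3) unfolding T_def by auto
    have "inside T (e_states B1) \<subseteq> e_trans B1" unfolding inside_def T_def using dA dB W1(3) W1(4) by auto
    then have "w1 \<in> lang s" using h(4) e IH2 steps_mono by blast
    moreover have "w2 = []" using steps_noout[OF h(5)] noout e by auto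
    ultimately show ?thesis using h(6) e by simp
  qed
  show ?case unfolding A
  proof
    assume "steps T n w (n+1)"
    then obtain l p' w' where h: "(n, l, p') \<in> T" "steps T p' w' (n+1)" "w = lab l @ w'"
      using steps_first by fastforce
    have "(n, l, p') \<notin> e_trans A1" "(n, l, p') \<notin> e_trans B1" using W1(4) W2(4) dA dB by blast+
    then have "l = None \<and> (p' = e_init A1 \<or> p' = e_init B1)" using h(1) dA[OF W1(3)] dB[OF W2(3)] unfolding T_def by auto
    then show "w \<in> lang (Plus r s)" using h branch branch2 by auto
  next
    assume "w \<in> lang (Plus r s)"
    then have "w \<in> lang r \<or> w \<in> lang s" by simp
    then show "steps T n w (n+1)"
    proof
      assume "w \<in> lang r"
      then have "steps (e_trans A1) (e_init A1) w (e_final A1)" using IH1 by blast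
      then have s1: "steps T (e_init A1) w (e_final A1)" by (rule steps_mono) (auto simp: T_def)
      have s0: "steps T n [] (e_init A1)" using sedge[of n None "e_init A1" T] by (simp add: T_def)
      have s2: "steps T (e_final A1) [] (n+1)" using sedge[of "e_final A1" None "n+1" T] by (simp add: T_def)
      show ?thesis using steps_trans[OF steps_trans[OF s0 s1] s2] by simp
    next
      assume "w \<in> lang s"
      then have "steps (e_trans B1) (e_init B1) w (e_final B1)" using IH2 by blast
      then have s1: "steps T (e_init B1) w (e_final B1)" by (rule steps_mono) (auto simp: T_def)
      have s0: "steps T n [] (e_init B1)" using sedge[of n None "e_init B1" T] by (simp add: T_def)
      have s2: "steps T (e_final B1) [] (n+1)" using sedge[of "e_final B1" None "n+1" T] by (simp add: T_def)
      show ?thesis using steps_trans[OF steps_trans[OF s0 s1] s2] by simp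
    qed
  qed
next
  case (Times r s)
  obtain A1 m1 where a: "thompson r n = (A1, m1)" by (metis surj_pair)
  obtain B1 k where b: "thompson s m1 = (B1, k)" by (metis surj_pair)
  have w1: "wf_enfa A1 n m1" and w2: "wf_enfa B1 m1 k" using thompson_wf a b by auto
  note W1 = wfD[OF w1] and W2 = wfD[OF w2]
  have IH1: "\<And>w. steps (e_trans A1) (e_init A1) w (e_final A1) \<longleftrightarrow> w \<in> lang r" using Times.IH(1)[OF a] .
  have IH2: "\<And>w. steps (e_trans B1) (e_init B1) w (e_final B1) \<longleftrightarrow> w \<in> lang s" using Times.IH(2)[OF b] .
  define T where "T = e_trans A1 \<union> e_trans B1 \<union> {(e_final A1, None, e_init B1)}"
  have Aeq: "A = \<lparr>e_states = e_states A1 \<union> e_states B1, e_init = e_init A1, e_final = e_final B1,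
        e_trans = T\<rparr>"
    using Times.prems a b unfolding T_def by (simp add: Let_def)
  have A: "e_trans A = T" "e_init A = e_init A1" "e_final A = e_final B1"
    by (simp_all add: Aeq)
  have dA: "\<And>x. x \<in> e_states A1 \<Longrightarrow> x \<notin> e_states B1" using W1(1) W2(1) by fastforce
  show ?case unfolding A
  proof
    assume st: "steps T (e_init A1) w (e_final B1)"
    from steps_exit[OF st W1(2)] obtain s' l t w1 w2 where h: "(s', l, t) \<in> T" "s' \<in> e_states A1"
      "t \<notin> e_states A1" "steps (inside T (e_states A1)) (e_init A1) w1 s'"
      "steps T t w2 (e_final B1)" "w = w1 @ lab l @ w2" using dA W2(3) by blast
    have "(s', l, t) \<notin> e_trans A1" "(s', l, t) \<notin> e_trans B1" using h(2,3) W1(5) W2(4) dA by blast+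
    then have e: "s' = e_final A1 \<and> l = None \<and> t = e_init B1" using h(1,2) unfolding T_def by auto
    have "inside T (e_states A1) \<subseteq> e_trans A1" unfolding inside_def T_def using dA W2(4) W2(3) W2(2) by auto
    then have r1: "w1 \<in> lang r" using h(4) e IH1 steps_mono by blast
    from steps_exit[OF h(5)[unfolded e[THEN conjunct2, THEN conjunct2]] W2(2)]
    have "steps (inside T (e_states B1)) (e_init B1) w2 (e_final B1)"
      using dA W1(3) W1(4) W2(5) unfolding T_def by blast
    moreover have "inside T (e_states B1) \<subseteq> e_trans B1" unfolding inside_def T_def using dA W1(3) W1(4) by auto
    ultimately have "w2 \<in> lang s" using IH2 steps_mono by blast
    then show "w \<in> lang (Times r s)" using r1 h(6) e by (auto simp: conc_def)
  next
    assume "w \<in> lang (Times r s)"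
    then obtain u v where uv: "w = u @ v" "u \<in> lang r" "v \<in> lang s" by (auto simp: conc_def)
    have "steps (e_trans A1) (e_init A1) u (e_final A1)" using uv IH1 by blast
    then have s1: "steps T (e_init A1) u (e_final A1)" by (rule steps_mono) (auto simp: T_def)
    have "steps (e_trans B1) (e_init B1) v (e_final B1)" using uv IH2 by blast
    then have s2: "steps T (e_init B1) v (e_final B1)" by (rule steps_mono) (auto simp: T_def)
    have s0: "steps T (e_final A1) [] (e_init B1)" using sedge[of "e_final A1" None "e_init B1" T] by (simp add: T_def)
    show "steps T (e_init A1) w (e_final B1)" using steps_trans[OF steps_trans[OF s1 s0] s2] uv(1) by simp
  qed
next
  case (Star r)
  obtain A1 m1 where a: "thompson r (n+2) = (A1, m1)" by (metis surj_pair)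
  have w1: "wf_enfa A1 (n+2) m1" using thompson_wf a by auto
  note W1 = wfD[OF w1]
  have IH1: "\<And>w. steps (e_trans A1) (e_init A1) w (e_final A1) \<longleftrightarrow> w \<in> lang r" using Star.IH[OF a] .
  define T where "T = e_trans A1 \<union>
          {(n, None, e_init A1), (n, None, n+1),
           (e_final A1, None, e_init A1), (e_final A1, None, n+1)}"
  have Aeq: "A = \<lparr>e_states = {n, n+1} \<union> e_states A1, e_init = n, e_final = n+1,
        e_trans = T\<rparr>"
    using Star.prems a unfolding T_def by (simp add: Let_def)
  have A: "e_trans A = T" "e_init A = n" "e_final A = n+1"
    by (simp_all add: Aeq)
  have dA: "\<And>x. x \<in> e_states A1 \<Longrightarrow> x \<noteq> n \<and> x \<noteq> n+1" using W1(1) by fastforce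
  have noout: "\<forall>l t. (n+1, l, t) \<notin> T" unfolding T_def using dA[OF W1(3)] W1(4) dA by fastforce
  show ?case unfolding A
  proof
    assume "steps T n w (n+1)"
    then obtain l p' w' where h: "(n, l, p') \<in> T" "steps T p' w' (n+1)" "w = lab l @ w'"
      using steps_first by fastforce
    have "(n, l, p') \<notin> e_trans A1" using W1(4) dA by blast
    then have "l = None \<and> (p' = e_init A1 \<or> p' = n+1)" using h(1) dA[OF W1(3)] unfolding T_def by auto
    moreover have kst: "w' \<in> kstar (lang r)" if st: "steps T (e_init A1) w' (n+1)"
    proof -
      from steps_exit[OF st W1(2)] obtain s' l t w1 w2 where h2: "(s', l, t) \<in> T" "s' \<in> e_states A1"
        "t \<notin> e_states A1" "steps (inside T (e_states A1)) (e_init A1) w1 s'"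
        "steps T t w2 (n+1)" "w' = w1 @ lab l @ w2" using dA[of "n+1"] by blast
      have "(s', l, t) \<notin> e_trans A1" using h2(3) W1(5) by blast
      then have e: "s' = e_final A1 \<and> l = None \<and> t = n+1" using h2(1,2,3) dA[OF h2(2)] W1(2) unfolding T_def by auto
      then have "w2 = []" using steps_noout[OF h2(5)] noout by auto
      have "inside T (e_states A1) \<subseteq> e_trans A1 \<union> {(e_final A1, None, e_init A1)}"
        unfolding inside_def T_def using dA by auto
      then have st2: "steps (e_trans A1 \<union> {(e_final A1, None, e_init A1)}) (e_init A1) w1 (e_final A1)"
        using h2(4) e steps_mono by blast
      from steps_back[OF st2 refl refl, of "lang r"] IH1
      obtain u v where "w1 = u @ v" "u \<in> lang r" "v \<in> kstar (lang r)" by blast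
      then show "w' \<in> kstar (lang r)" using h2(6) e \<open>w2 = []\<close> by (auto intro: kstar.intros)
    qed
    ultimately show "w \<in> lang (Star r)"
    proof (elim conjE disjE)
      assume "l = None" "p' = e_init A1"
      then show ?thesis using h(2,3) kst by simp
    next
      assume "l = None" "p' = n+1"
      then have "w' = []" using steps_noout[OF h(2)] noout by simp
      then show ?thesis using h(3) \<open>l = None\<close> by (simp add: kstar.kstar_Nil)
    qed
  next
    have fin: "steps T (e_final A1) v (n+1)" if "v \<in> kstar (lang r)" for v
      using that
    proof (induction rule: kstar.induct)
      case kstar_Nil
      show ?case using sedge[of "e_final A1" None "n+1" T] by (simp add: T_def)
    next
      case (kstar_app u v)
      have "steps (e_trans A1) (e_init A1) u (e_final A1)" using kstar_app IH1 by blast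
      then have s1: "steps T (e_init A1) u (e_final A1)" by (rule steps_mono) (auto simp: T_def)
      have s0: "steps T (e_final A1) [] (e_init A1)" using sedge[of "e_final A1" None "e_init A1" T] by (simp add: T_def)
      show ?case using steps_trans[OF steps_trans[OF s0 s1] kstar_app.IH] by simp
    qed
    assume "w \<in> lang (Star r)"
    then have k: "w \<in> kstar (lang r)" by simp
    then show "steps T n w (n+1)"
    proof (cases rule: kstar.cases)
      case kstar_Nil
      then show ?thesis using sedge[of n None "n+1" T] by (simp add: T_def)
    next
      case (kstar_app u v)
      have "steps (e_trans A1) (e_init A1) u (e_final A1)" using kstar_app IH1 by blast
      then have s1: "steps T (e_init A1) u (e_final A1)" by (rule steps_mono) (auto simp: T_def)
      have s0: "steps T n [] (e_init A1)" using sedge[of n None "e_init A1" T] by (simp add: T_def)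
      show ?thesis using steps_trans[OF steps_trans[OF s0 s1] fin[OF kstar_app(3)]] kstar_app(1) by simp
    qed
  qed
qed


section \<open>Epsilon elimination\<close>

lemma steps_eps: "steps T p w q \<Longrightarrow>
  (case w of [] \<Rightarrow> (p, q) \<in> {(a, b). (a, None, b) \<in> T}\<^sup>*
   | \<sigma> # w' \<Rightarrow> (\<exists>p1 q1. (p, p1) \<in> {(a, b). (a, None, b) \<in> T}\<^sup>* \<and> (p1, Some \<sigma>, q1) \<in> T \<and> steps T q1 w' q))"
proof (induction rule: steps.induct)
  case (srefl p)
  then show ?case by simp
next
  case (sstep p l p' w q)
  show ?case
  proof (cases l)
    case None
    then have e: "(p, p') \<in> {(a, b). (a, None, b) \<in> T}" using sstep.hyps(1) by simp
    show ?thesis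
    proof (cases w)
      case Nil
      then have "(p', q) \<in> {(a, b). (a, None, b) \<in> T}\<^sup>*" using sstep.IH by simp
      then show ?thesis using converse_rtrancl_into_rtrancl[OF e] Nil None by simp
    next
      case (Cons a w')
      then obtain p1 q1 where h: "(p', p1) \<in> {(a, b). (a, None, b) \<in> T}\<^sup>*" "(p1, Some a, q1) \<in> T" "steps T q1 w' q"
        using sstep.IH by auto
      have "(p, p1) \<in> {(a, b). (a, None, b) \<in> T}\<^sup>*" using converse_rtrancl_into_rtrancl[OF e h(1)] .
      then show ?thesis using h Cons None by auto
    qed
  next
    case (Some a)
    then show ?thesis using sstep.hyps by auto
  qed
qed

lemma eps_steps: "(p, q) \<in> {(a, b). (a, None, b) \<in> T}\<^sup>* \<Longrightarrow> steps T p [] q"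
proof (induction rule: converse_rtrancl_induct)
  case base
  then show ?case by (rule steps.srefl)
next
  case (step y z)
  then show ?case using steps.sstep[of y None z T "[]" q] by simp
qed

fun nacc :: "('s, 'a) nfa \<Rightarrow> 's \<Rightarrow> 'a list \<Rightarrow> bool" where
  "nacc N q [] = (q \<in> n_states N \<and> q \<in> n_final N)"
| "nacc N q (\<sigma> # w) = (q \<in> n_states N \<and> (\<exists>q'. (q, \<sigma>, q') \<in> n_trans N \<and> nacc N q' w))"

lemma nacc_states: "nacc N q w \<Longrightarrow> q \<in> n_states N"
  by (cases w) auto

lemma eps_fields: "n_states (eps_elim A) = e_states A"
  "q \<in> n_final (eps_elim A) \<longleftrightarrow> q \<in> e_states A \<and> (q, e_final A) \<in> (eps_rel A)\<^sup>*"
  "(q, \<sigma>, q') \<in> n_trans (eps_elim A) \<longleftrightarrow> (\<exists>p. (q, p) \<in> (eps_rel A)\<^sup>* \<and> (p, Some \<sigma>, q') \<in> e_trans A)"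
  by (simp_all add: eps_elim_def)

lemma eps_rel_eq: "eps_rel A = {(a, b). (a, None, b) \<in> e_trans A}"
  by (simp add: eps_rel_def)

lemma eps_elim_correct:
  assumes wf: "\<And>p l q. (p, l, q) \<in> e_trans A \<Longrightarrow> q \<in> e_states A"
  shows "p \<in> e_states A \<Longrightarrow> nacc (eps_elim A) p w \<longleftrightarrow> steps (e_trans A) p w (e_final A)"
proof (induction w arbitrary: p)
  case Nil
  show ?case
  proof
    assume "nacc (eps_elim A) p []"
    then have "(p, e_final A) \<in> (eps_rel A)\<^sup>*" by (simp only: nacc.simps eps_fields)
    then show "steps (e_trans A) p [] (e_final A)" using eps_steps unfolding eps_rel_eq by blast
  next
    assume "steps (e_trans A) p [] (e_final A)"
    from steps_eps[OF this] have "(p, e_final A) \<in> (eps_rel A)\<^sup>*" unfolding eps_rel_eq by simp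
    then show "nacc (eps_elim A) p []" using Nil by (simp only: nacc.simps eps_fields)
  qed
next
  case (Cons \<sigma> w)
  show ?case
  proof
    assume "nacc (eps_elim A) p (\<sigma> # w)"
    then obtain q' where h0: "(p, \<sigma>, q') \<in> n_trans (eps_elim A)" "nacc (eps_elim A) q' w"
      by (simp only: nacc.simps) blast
    then obtain p1 where h: "(p, p1) \<in> (eps_rel A)\<^sup>*" "(p1, Some \<sigma>, q') \<in> e_trans A"
      by (auto simp only: eps_fields)
    have "q' \<in> e_states A" using wf h(2) .
    then have s2: "steps (e_trans A) q' w (e_final A)" using Cons.IH h0(2) by blast
    have s0: "steps (e_trans A) p [] p1" using eps_steps h(1) unfolding eps_rel_eq by blast
    have s1: "steps (e_trans A) p1 [\<sigma>] q'" using sedge[OF h(2)] by simp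
    show "steps (e_trans A) p (\<sigma> # w) (e_final A)" using steps_trans[OF steps_trans[OF s0 s1] s2] by simp
  next
    assume "steps (e_trans A) p (\<sigma> # w) (e_final A)"
    from steps_eps[OF this] obtain p1 q1 where h: "(p, p1) \<in> {(a, b). (a, None, b) \<in> e_trans A}\<^sup>*"
      "(p1, Some \<sigma>, q1) \<in> e_trans A" "steps (e_trans A) q1 w (e_final A)"
      by auto
    have "q1 \<in> e_states A" using wf h(2) .
    then have n1: "nacc (eps_elim A) q1 w" using Cons.IH h(3) by blast
    have "(p, \<sigma>, q1) \<in> n_trans (eps_elim A)" unfolding eps_fields eps_rel_eq using h(1,2) by blast
    moreover have "p \<in> n_states (eps_elim A)" using Cons.prems by (simp only: eps_fields)
    ultimately show "nacc (eps_elim A) p (\<sigma> # w)" using n1 by (simp only: nacc.simps) blast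
  qed
qed

lemma re_to_nfa_correct: "nacc (re_to_nfa r) (e_init (fst (thompson r 0))) w \<longleftrightarrow> w \<in> lang r"
proof -
  obtain A m where a: "thompson r 0 = (A, m)" by (metis surj_pair)
  note W = wfD[OF thompson_wf[OF a]]
  show ?thesis unfolding re_to_nfa_def a fst_conv
    by (simp only: eps_elim_correct[OF W(5) W(2)] thompson_correct[OF a])
qed

lemma re_to_nfa_fin: "finite {q'. (q, \<sigma>, q') \<in> n_trans (re_to_nfa r)}"
proof -
  obtain A m where a: "thompson r 0 = (A, m)" by (metis surj_pair)
  note W = wfD[OF thompson_wf[OF a]]
  have "{q'. (q, \<sigma>, q') \<in> n_trans (re_to_nfa r)} \<subseteq> (\<lambda>t. snd (snd t)) ` e_trans A"
  proof
    fix x assume "x \<in> {q'. (q, \<sigma>, q') \<in> n_trans (re_to_nfa r)}"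
    then obtain p where "(p, Some \<sigma>, x) \<in> e_trans A" unfolding re_to_nfa_def a fst_conv eps_fields by blast
    then show "x \<in> (\<lambda>t. snd (snd t)) ` e_trans A" by (rule rev_image_eqI) simp
  qed
  then show ?thesis using W(6) finite_subset finite_imageI by blast
qed

section \<open>BFA semantics\<close>

lemma beval_bdisj: "finite S \<Longrightarrow> beval v (bdisj S) = (\<exists>q\<in>S. v q)"
proof -
  have "beval v (foldr (\<lambda>q f. BOr (BVar q) f) xs BFalse) = (\<exists>q\<in>set xs. v q)" for xs
    by (induction xs) auto
  then show "finite S \<Longrightarrow> ?thesis" unfolding bdisj_def by simp
qed

lemma beval_map: "beval v (map_bexp f e) = beval (v \<circ> f) e"
  by (induction e) auto

fun bval :: "('q, 'a) bfa \<Rightarrow> 'a list \<Rightarrow> 'q \<Rightarrow> bool" where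
  "bval B [] = (\<lambda>q. q \<in> b_states B \<and> b_fin B q)"
| "bval B (\<sigma> # w) = (\<lambda>q. q \<in> b_states B \<and> beval (bval B w) (b_trans B q \<sigma>))"

lemma bval_nfa: "(\<And>q \<sigma>. finite {q'. (q, \<sigma>, q') \<in> n_trans N}) \<Longrightarrow>
  bval (nfa_to_bfa N) w q = nacc N q w"
  by (induction w arbitrary: q) (auto simp: nfa_to_bfa_def beval_bdisj)

lemma lift_fields: "b_states (bfa_lift B) = Base ` b_states B"
  "b_fin (bfa_lift B) (Base n) = b_fin B n"
  "b_trans (bfa_lift B) (Base n) \<sigma> = map_bexp Base (b_trans B n \<sigma>)"
  "b_init (bfa_lift B) = map_bexp Base (b_init B)"
  by (simp_all add: bfa_lift_def)

lemma bval_lift: "bval (bfa_lift B) w \<circ> Base = bval B w"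
proof (induction w)
  case Nil
  then show ?case by (auto simp: lift_fields)
next
  case (Cons a w)
  show ?case
  proof
    fix x
    show "(bval (bfa_lift B) (a # w) \<circ> Base) x = bval B (a # w) x"
      by (auto simp: lift_fields beval_map Cons.IH)
  qed
qed

lemma dunion_fields: "b_states (bfa_dunion B1 B2 I) = InL ` b_states B1 \<union> InR ` b_states B2"
  "b_fin (bfa_dunion B1 B2 I) (InL n) = b_fin B1 n"
  "b_fin (bfa_dunion B1 B2 I) (InR n) = b_fin B2 n"
  "b_trans (bfa_dunion B1 B2 I) (InL n) \<sigma> = map_bexp InL (b_trans B1 n \<sigma>)"
  "b_trans (bfa_dunion B1 B2 I) (InR n) \<sigma> = map_bexp InR (b_trans B2 n \<sigma>)"
  "b_init (bfa_dunion B1 B2 I) = I"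
  by (simp_all add: bfa_dunion_def)

lemma bval_dunion: "bval (bfa_dunion B1 B2 I) w \<circ> InL = bval B1 w \<and> bval (bfa_dunion B1 B2 I) w \<circ> InR = bval B2 w"
proof (induction w)
  case Nil
  then show ?case by (auto simp: dunion_fields)
next
  case (Cons a w)
  have 1: "bval (bfa_dunion B1 B2 I) (a # w) \<circ> InL = bval B1 (a # w)"
  proof
    fix x
    show "(bval (bfa_dunion B1 B2 I) (a # w) \<circ> InL) x = bval B1 (a # w) x"
      by (auto simp: dunion_fields beval_map Cons.IH[THEN conjunct1] Cons.IH[THEN conjunct2])
  qed
  have 2: "bval (bfa_dunion B1 B2 I) (a # w) \<circ> InR = bval B2 (a # w)"
  proof
    fix x
    show "(bval (bfa_dunion B1 B2 I) (a # w) \<circ> InR) x = bval B2 (a # w) x"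
      by (auto simp: dunion_fields beval_map Cons.IH[THEN conjunct1] Cons.IH[THEN conjunct2])
  qed
  show ?case using 1 2 by blast
qed

lemma bval_compl: "bval (bfa_compl B) w = bval B w"
  by (induction w) (auto simp: bfa_compl_def)

lemma smt_bval: "beval (bval (smt_to_bfa \<phi>) w) (b_init (smt_to_bfa \<phi>)) = smt_sat \<phi> w"
proof (induction \<phi>)
  case (SAnd p q)
  then show ?case by (simp add: bfa_inter_def beval_map dunion_fields bval_dunion[THEN conjunct1] bval_dunion[THEN conjunct2])
next
  case (SOr p q)
  then show ?case by (simp add: bfa_union_def beval_map dunion_fields bval_dunion[THEN conjunct1] bval_dunion[THEN conjunct2])
next
  case (SNot p)
  then show ?case by (simp add: bval_compl) (simp add: bfa_compl_def)
next
  case (InRe r)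
  have "beval (bval (bfa_lift (nfa_to_bfa (re_to_nfa r))) w) (b_init (bfa_lift (nfa_to_bfa (re_to_nfa r))))
      = beval (bval (nfa_to_bfa (re_to_nfa r)) w) (b_init (nfa_to_bfa (re_to_nfa r)))"
    by (simp add: beval_map bval_lift lift_fields)
  also have "\<dots> = bval (nfa_to_bfa (re_to_nfa r)) w (e_init (fst (thompson r 0)))"
  proof -
    have "b_init (nfa_to_bfa (re_to_nfa r)) = bdisj {e_init (fst (thompson r 0))}"
      by (simp add: nfa_to_bfa_def re_to_nfa_def eps_elim_def)
    then show ?thesis by (simp only: beval_bdisj finite.emptyI finite_insert) simp
  qed
  also have "\<dots> = nacc (re_to_nfa r) (e_init (fst (thompson r 0))) w"
    by (rule bval_nfa[of "re_to_nfa r", OF re_to_nfa_fin])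
  also have "\<dots> = (w \<in> lang r)"
    by (rule re_to_nfa_correct)
  finally show ?case by simp
qed


section \<open>Transition system\<close>

lemma bval_out: "q \<notin> b_states B \<Longrightarrow> \<not> bval B w q"
  by (cases w) auto

lemma ts_fields: "ts_bits (fst (bfa_to_ts B)) = b_states B"
  "ts_init (fst (bfa_to_ts B)) v = beval v (b_init B)"
  "ts_trans (fst (bfa_to_ts B)) v x v' = (\<forall>q \<in> b_states B. v q = beval v' (b_trans B q x))"
  "snd (bfa_to_ts B) v = ((\<exists>q \<in> b_states B. b_fin B q \<and> \<not> v q) \<or> (\<exists>q \<in> b_states B. \<not> b_fin B q \<and> v q))"
  by (simp_all add: bfa_to_ts_def)

lemma cex_iff: "is_cex (fst (bfa_to_ts B)) (snd (bfa_to_ts B)) w \<longleftrightarrow> beval (bval B w) (b_init B)"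
proof
  assume "is_cex (fst (bfa_to_ts B)) (snd (bfa_to_ts B)) w"
  then obtain vs where p: "ts_path (fst (bfa_to_ts B)) w vs" "\<not> snd (bfa_to_ts B) (vs (length w))"
    unfolding is_cex_def by blast
  have st: "\<And>k q. k \<le> length w \<Longrightarrow> q \<notin> b_states B \<Longrightarrow> \<not> vs k q"
    using p(1) unfolding ts_path_def ts_state_def ts_fields by blast
  have tr: "\<And>k q. k < length w \<Longrightarrow> q \<in> b_states B \<Longrightarrow> vs k q = beval (vs (Suc k)) (b_trans B q (w ! k))"
    using p(1) unfolding ts_path_def ts_fields by blast
  have fin: "\<And>q. q \<in> b_states B \<Longrightarrow> vs (length w) q = b_fin B q"
    using p(2) unfolding ts_fields by blast
  have claim: "vs k = bval B (drop k w)" if "k \<le> length w" for k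
    using that
  proof (induction k rule: inc_induct)
    case base
    show ?case
    proof
      fix q show "vs (length w) q = bval B (drop (length w) w) q"
        using fin st[of "length w" q] by (cases "q \<in> b_states B") auto
    qed
  next
    case (step k)
    have d: "drop k w = w ! k # drop (Suc k) w" using step.hyps(2) by (simp add: Cons_nth_drop_Suc)
    show ?case
    proof
      fix q show "vs k q = bval B (drop k w) q"
        using tr[OF step.hyps(2), of q] st[of k q] step.hyps step.IH d by (cases "q \<in> b_states B") auto
    qed
  qed
  have "ts_init (fst (bfa_to_ts B)) (vs 0)" using p(1) unfolding ts_path_def by blast
  then show "beval (bval B w) (b_init B)" using claim[of 0] by (simp add: ts_fields)
next
  assume h: "beval (bval B w) (b_init B)"
  define vs where "vs k = bval B (drop k w)" for k
  have "ts_path (fst (bfa_to_ts B)) w vs"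
    unfolding ts_path_def
  proof (intro conjI allI impI)
    fix k assume "k \<le> length w"
    show "ts_state (fst (bfa_to_ts B)) (vs k)"
      unfolding ts_state_def ts_fields vs_def by (simp add: bval_out)
  next
    show "ts_init (fst (bfa_to_ts B)) (vs 0)" using h by (simp add: ts_fields vs_def)
  next
    fix k assume k: "k < length w"
    have d: "drop k w = w ! k # drop (Suc k) w" using k by (simp add: Cons_nth_drop_Suc)
    show "ts_trans (fst (bfa_to_ts B)) (vs k) (w ! k) (vs (Suc k))"
      unfolding ts_fields vs_def d by simp
  qed
  moreover have "\<not> snd (bfa_to_ts B) (vs (length w))"
    unfolding ts_fields vs_def by simp
  ultimately show "is_cex (fst (bfa_to_ts B)) (snd (bfa_to_ts B)) w"
    unfolding is_cex_def by blast
qed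

theorem mainTheorem2:
  fixes \<phi> :: "'a::finite smt" and T :: "(sloc, 'a) ts" and P :: "(sloc \<Rightarrow> bool) \<Rightarrow> bool"
  assumes "(T, P) = bfa_to_ts (smt_to_bfa \<phi>)"
  shows "(\<forall>w. smt_sat \<phi> w \<longleftrightarrow> is_cex T P w) \<and> ((\<exists>w. smt_sat \<phi> w) \<longleftrightarrow> \<not> ts_valid T P)"
proof -
  have TP: "T = fst (bfa_to_ts (smt_to_bfa \<phi>))" "P = snd (bfa_to_ts (smt_to_bfa \<phi>))"
    using assms by (metis fst_conv, metis snd_conv)
  have 1: "\<forall>w. smt_sat \<phi> w \<longleftrightarrow> is_cex T P w"
    unfolding TP cex_iff smt_bval by simp
  have 2: "\<not> ts_valid T P \<longleftrightarrow> (\<exists>w. is_cex T P w)"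
    unfolding ts_valid_def is_cex_def by blast
  show ?thesis using 1 2 by blast
qed

end
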